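(* Let $0<a<1$ and let $\Psi:\overline{\Omega}\times(0,+\infty)\to\mathbb{R}$ be a Hölder continuous function such that for each $x\in\Omega$ the map $s\mapsto\Psi(x,s)/s$ is strictly decreasing on $(0,+\infty)$. Assume $v,w\in C^2(\Omega)\cap C(\overline{\Omega})$ satisfy (a) $\Delta w+\Psi(x,w)+|\nabla w|^a\le0\le\Delta v+\Psi(x,v)+|\nabla v|^a$ in $\Omega$; (b) $v,w>0$ in $\Omega$ and $v<w$ on $\partial\Omega$. Then $v\le w$ in $\Omega$.
   Context: $\Omega\subset\mathbb{R}^N$ ($N\ge 2$) is a bounded domain with smooth boundary. *)

theory Defs
  imports "HOL-Analysis.Analysis"
begin

definition pd :: "'n::finite \<Rightarrow> (real^'n \<Rightarrow> real) \<Rightarrow> real^'n \<Rightarrow> real" where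
  "pd i f x = frechet_derivative f (at x) (axis i 1)"

fun Ck_on :: "nat \<Rightarrow> (real^'n::finite \<Rightarrow> real) \<Rightarrow> (real^'n) set \<Rightarrow> bool" where
  "Ck_on 0 f U = continuous_on U f"
| "Ck_on (Suc k) f U =
     ((\<forall>x\<in>U. f differentiable (at x)) \<and> (\<forall>i. Ck_on k (pd i f) U))"

definition smooth_on :: "(real^'n::finite \<Rightarrow> real) \<Rightarrow> (real^'n) set \<Rightarrow> bool" where
  "smooth_on f U \<longleftrightarrow> (\<forall>k. Ck_on k f U)"

definition grad :: "(real^'n::finite \<Rightarrow> real) \<Rightarrow> real^'n \<Rightarrow> real^'n" where
  "grad f x = (\<chi> i. pd i f x)"

definition laplacian :: "(real^'n::finite \<Rightarrow> real) \<Rightarrow> real^'n \<Rightarrow> real" where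
  "laplacian f x = (\<Sum>i\<in>UNIV. pd i (pd i f) x)"

definition smooth_boundary :: "(real^'n::finite) set \<Rightarrow> bool" where
  "smooth_boundary \<Omega> \<longleftrightarrow>
     (\<forall>p\<in>frontier \<Omega>. \<exists>U \<rho>. open U \<and> p \<in> U \<and> smooth_on \<rho> U \<and>
        (\<forall>x\<in>U. grad \<rho> x \<noteq> 0) \<and> \<Omega> \<inter> U = {x\<in>U. \<rho> x < 0})"

definition holder_on :: "('a::metric_space) set \<Rightarrow> ('a \<Rightarrow> real) \<Rightarrow> bool" where
  "holder_on S f \<longleftrightarrow> (\<forall>K. compact K \<and> K \<subseteq> S \<longrightarrow>
     (\<exists>\<alpha> C. 0 < \<alpha> \<and> \<alpha> \<le> 1 \<and> (\<forall>x\<in>K. \<forall>y\<in>K. \<bar>f x - f y\<bar> \<le> C * dist x y powr \<alpha>)))"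

end

theory Submission
  imports Defs
begin

lemma dir_deriv:
  fixes f :: "real^'n::finite \<Rightarrow> real"
  assumes "f differentiable (at (x + s *\<^sub>R e))"
  shows "((\<lambda>s. f (x + s *\<^sub>R e)) has_real_derivative frechet_derivative f (at (x + s *\<^sub>R e)) e) (at s)"
proof -
  let ?L = "frechet_derivative f (at (x + s *\<^sub>R e))"
  have fd: "(f has_derivative ?L) (at (x + s *\<^sub>R e))"
    using assms frechet_derivative_works by blast
  have g: "((\<lambda>s. x + s *\<^sub>R e) has_derivative (\<lambda>h. h *\<^sub>R e)) (at s)"
    by (auto intro!: derivative_eq_intros)
  have c: "((\<lambda>s. f (x + s *\<^sub>R e)) has_derivative (\<lambda>h. ?L (h *\<^sub>R e))) (at s)"
    using has_derivative_compose[OF g fd] by (simp add: o_def)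
  have lin: "linear ?L" using fd has_derivative_linear by blast
  have "(\<lambda>h. ?L (h *\<^sub>R e)) = (*) (?L e)"
    using linear_scale[OF lin] by (auto simp: mult.commute)
  then show ?thesis using c by (simp add: has_field_derivative_def)
qed

lemma second_min:
  fixes h h' :: "real \<Rightarrow> real"
  assumes d: "0 < \<delta>" and hd: "\<And>s. \<bar>s\<bar> < \<delta> \<Longrightarrow> (h has_real_derivative h' s) (at s)"
    and h2: "(h' has_real_derivative D) (at 0)"
    and mn: "\<And>s. \<bar>s\<bar> < \<delta> \<Longrightarrow> h 0 \<le> h s"
  shows "h' 0 = 0 \<and> 0 \<le> D"
proof
  show z: "h' 0 = 0"
    by (rule DERIV_local_min[OF hd[of 0] d]) (use d mn in auto)
  show "0 \<le> D"
  proof (rule ccontr)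
    assume "\<not> 0 \<le> D"
    then obtain e where e: "e > 0" "\<And>t. t > 0 \<Longrightarrow> t < e \<Longrightarrow> h' 0 > h' (0 + t)"
      using DERIV_neg_dec_right[OF h2] by force
    define s where "s = min e \<delta> / 2"
    have s: "0 < s" "s < e" "s < \<delta>" using e d by (auto simp: s_def)
    have "\<forall>x. 0 \<le> x \<and> x \<le> s \<longrightarrow> (h has_real_derivative h' x) (at x)"
      using s by (auto intro!: hd)
    then obtain z where z: "0 < z" "z < s" "h s - h 0 = (s - 0) * h' z"
      using MVT2[OF s(1)] by blast
    have "h' z < 0" using e(2)[of z] z s \<open>h' 0 = 0\<close> by auto
    then have "h s - h 0 < 0" using z s by (simp add: mult_pos_neg)
    moreover have "h 0 \<le> h s" using mn s by auto
    ultimately show False by simp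
  qed
qed
theorem lemma2p3:
  fixes \<Omega> :: "(real^'n) set"
    and \<Psi> :: "real^'n \<Rightarrow> real \<Rightarrow> real"
    and v w :: "real^'n \<Rightarrow> real"
    and a :: real
  assumes N2: "CARD('n) \<ge> 2"
    and dom: "open \<Omega>" "connected \<Omega>" "bounded \<Omega>" "\<Omega> \<noteq> {}"
    and smooth: "smooth_boundary \<Omega>"
    and a: "0 < a" "a < 1"
    and Psi_holder: "holder_on (closure \<Omega> \<times> {0<..}) (\<lambda>(x, s). \<Psi> x s)"
    and Psi_dec: "\<And>x. x \<in> \<Omega> \<Longrightarrow> strict_antimono_on {0<..} (\<lambda>s. \<Psi> x s / s)"
    and v_reg: "Ck_on 2 v \<Omega>" "continuous_on (closure \<Omega>) v"
    and w_reg: "Ck_on 2 w \<Omega>" "continuous_on (closure \<Omega>) w"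
    and w_super: "\<And>x. x \<in> \<Omega> \<Longrightarrow>
        laplacian w x + \<Psi> x (w x) + norm (grad w x) powr a \<le> 0"
    and v_sub: "\<And>x. x \<in> \<Omega> \<Longrightarrow>
        0 \<le> laplacian v x + \<Psi> x (v x) + norm (grad v x) powr a"
    and pos: "\<And>x. x \<in> \<Omega> \<Longrightarrow> v x > 0 \<and> w x > 0"
    and bdry: "\<And>x. x \<in> frontier \<Omega> \<Longrightarrow> v x < w x"
  shows "\<forall>x\<in>\<Omega>. v x \<le> w x"
proof (rule ccontr)
  assume "\<not> (\<forall>x\<in>\<Omega>. v x \<le> w x)"
  then obtain x1 where x1: "x1 \<in> \<Omega>" "w x1 < v x1" by auto
  have cl: "closure \<Omega> = \<Omega> \<union> frontier \<Omega>" by (rule closure_Un_frontier)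
  have vnn: "x \<in> closure \<Omega> \<Longrightarrow> 0 \<le> v x" for x
    by (rule continuous_ge_on_closure[OF v_reg(2)]) (use pos in \<open>auto simp: less_imp_le\<close>)
  have wpos: "x \<in> closure \<Omega> \<Longrightarrow> 0 < w x" for x
  proof -
    assume "x \<in> closure \<Omega>"
    then consider "x \<in> \<Omega>" | "x \<in> frontier \<Omega>" using cl by auto
    then show ?thesis
    proof cases
      case 1 then show ?thesis using pos by auto
    next
      case 2 then show ?thesis using bdry[of x] vnn[of x] \<open>x \<in> closure \<Omega>\<close> by auto
    qed
  qed
  define \<phi> where "\<phi> x = v x / w x" for x
  have phic: "continuous_on (closure \<Omega>) \<phi>"
    unfolding \<phi>_def using v_reg(2) w_reg(2) wpos
    by (intro continuous_on_divide) (auto dest: wpos[THEN less_imp_neq])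
  have cpt: "compact (closure \<Omega>)" using dom(3) by (simp add: compact_closure)
  obtain x0 where x0: "x0 \<in> closure \<Omega>" "\<And>y. y \<in> closure \<Omega> \<Longrightarrow> \<phi> y \<le> \<phi> x0"
    using continuous_attains_sup[OF cpt _ phic] dom(4) by auto
  define t where "t = \<phi> x0"
  have x1cl: "x1 \<in> closure \<Omega>" using x1 closure_subset by auto
  have "\<phi> x1 > 1" using x1 pos[of x1] by (simp add: \<phi>_def)
  then have t1: "t > 1" using x0(2)[OF x1cl] by (simp add: t_def)
  have x0O: "x0 \<in> \<Omega>"
  proof (rule ccontr)
    assume "x0 \<notin> \<Omega>"
    then have "x0 \<in> frontier \<Omega>" using x0 cl by auto
    then have "v x0 < w x0" by (rule bdry)
    then have "\<phi> x0 < 1" using wpos[OF x0(1)] by (simp add: \<phi>_def)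
    then show False using t1 by (simp add: t_def)
  qed
  have wx0: "w x0 > 0" using pos x0O by auto
  have vx0: "v x0 = t * w x0" using wx0 by (simp add: t_def \<phi>_def)
  have ge: "y \<in> \<Omega> \<Longrightarrow> v y \<le> t * w y" for y
  proof -
    assume y: "y \<in> \<Omega>"
    then have "\<phi> y \<le> t" using x0(2) closure_subset t_def by auto
    then show ?thesis using pos[OF y] by (simp add: \<phi>_def divide_le_eq)
  qed
  obtain \<epsilon> where \<epsilon>: "\<epsilon> > 0" "ball x0 \<epsilon> \<subseteq> \<Omega>" using dom(1) x0O open_contains_ball by blast
  have C2: "\<And>f. Ck_on 2 f \<Omega> \<Longrightarrow> (\<forall>x\<in>\<Omega>. f differentiable (at x)) \<and> (\<forall>i. \<forall>x\<in>\<Omega>. pd i f differentiable (at x))"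
    by (simp add: numeral_2_eq_2)
  have key: "pd i v x0 = t * pd i w x0 \<and> 0 \<le> t * pd i (pd i w) x0 - pd i (pd i v) x0" for i
  proof -
    let ?e = "axis i (1::real) :: real^'n"
    have inb: "\<bar>s\<bar> < \<epsilon> \<Longrightarrow> x0 + s *\<^sub>R ?e \<in> \<Omega>" for s
      using \<epsilon> by (intro subsetD[OF \<epsilon>(2)]) (auto simp: dist_norm)
    define h where "h s = t * w (x0 + s *\<^sub>R ?e) - v (x0 + s *\<^sub>R ?e)" for s
    define h' where "h' s = t * pd i w (x0 + s *\<^sub>R ?e) - pd i v (x0 + s *\<^sub>R ?e)" for s
    have hd: "(h has_real_derivative h' s) (at s)" if "\<bar>s\<bar> < \<epsilon>" for s
    proof -
      have "x0 + s *\<^sub>R ?e \<in> \<Omega>" using inb that .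
      then have dw: "w differentiable (at (x0 + s *\<^sub>R ?e))" and dv: "v differentiable (at (x0 + s *\<^sub>R ?e))"
        using C2[OF w_reg(1)] C2[OF v_reg(1)] by auto
      show ?thesis unfolding h_def h'_def pd_def
        by (rule DERIV_diff[OF DERIV_cmult[OF dir_deriv[OF dw]] dir_deriv[OF dv]])
    qed
    have h2: "(h' has_real_derivative (t * pd i (pd i w) x0 - pd i (pd i v) x0)) (at 0)"
    proof -
      have dw: "pd i w differentiable (at (x0 + 0 *\<^sub>R ?e))" and dv: "pd i v differentiable (at (x0 + 0 *\<^sub>R ?e))"
        using C2[OF w_reg(1)] C2[OF v_reg(1)] x0O by auto
      have "(h' has_real_derivative (t * frechet_derivative (pd i w) (at (x0 + 0 *\<^sub>R ?e)) ?e
          - frechet_derivative (pd i v) (at (x0 + 0 *\<^sub>R ?e)) ?e)) (at 0)"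
        unfolding h'_def by (rule DERIV_diff[OF DERIV_cmult[OF dir_deriv[OF dw]] dir_deriv[OF dv]])
      then show ?thesis by (simp add: pd_def)
    qed
    have mn: "h 0 \<le> h s" if "\<bar>s\<bar> < \<epsilon>" for s
      using ge[OF inb[OF that]] vx0 by (simp add: h_def)
    have "h' 0 = 0 \<and> 0 \<le> t * pd i (pd i w) x0 - pd i (pd i v) x0"
      by (rule second_min[OF \<epsilon>(1) hd h2 mn])
    then show ?thesis by (simp add: h'_def)
  qed
  have gradeq: "grad v x0 = t *\<^sub>R grad w x0"
    using key by (simp add: grad_def vec_eq_iff)
  have normeq: "norm (grad v x0) = t * norm (grad w x0)"
    using gradeq t1 by simp
  have lap: "laplacian v x0 \<le> t * laplacian w x0"
  proof -
    have "0 \<le> (\<Sum>i\<in>UNIV. t * pd i (pd i w) x0 - pd i (pd i v) x0)"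
      using key by (intro sum_nonneg) auto
    then show ?thesis by (simp add: laplacian_def sum_subtractf sum_distrib_left)
  qed
  have pw: "norm (grad v x0) powr a \<le> t * norm (grad w x0) powr a"
  proof -
    have "norm (grad v x0) powr a = t powr a * norm (grad w x0) powr a"
      using normeq t1 by (simp add: powr_mult)
    also have "t powr a \<le> t"
      using t1 a powr_mono[of a 1 t] by simp
    then have "t powr a * norm (grad w x0) powr a \<le> t * norm (grad w x0) powr a"
      by (intro mult_right_mono) auto
    finally show ?thesis .
  qed
  have psi: "\<Psi> x0 (v x0) < t * \<Psi> x0 (w x0)"
  proof -
    have "w x0 < t * w x0" using t1 wx0 by simp
    then have "\<Psi> x0 (t * w x0) / (t * w x0) < \<Psi> x0 (w x0) / w x0"
      using Psi_dec[OF x0O] wx0 t1 unfolding monotone_on_def by auto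
    then show ?thesis using vx0 wx0 t1 by (simp add: divide_less_eq field_simps)
  qed
  have "0 \<le> laplacian v x0 + \<Psi> x0 (v x0) + norm (grad v x0) powr a" using v_sub[OF x0O] .
  also have "\<dots> < t * (laplacian w x0 + \<Psi> x0 (w x0) + norm (grad w x0) powr a)"
    using lap pw psi by (simp add: algebra_simps)
  also have "\<dots> \<le> 0" using w_super[OF x0O] t1 by (simp add: mult_nonneg_nonpos)
  finally show False by simp
qed

end
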